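(* Let $\bm X$ be an $n\times p$ matrix of full column rank and $\bm Z$ an $n\times q$ matrix, $q=q_1+\dots+q_r$. There exists a finite constant $\hat\varphi$, depending only on $\bm W=(\bm X,\bm Z)$ (and the block sizes $q_j$), such that for every $\bm\tau\in(0,\infty)^r$ and every $\bm l=(l_1,\dots,l_n)^T\in\mathbb{R}^n$, $$\big\|S(\bm\tau)^{-1}\bm Z^T(\bm I-P_X)\bm l\big\|\le\hat\varphi\sum_{i=1}^n|l_i|,$$ where $\|\cdot\|$ is the Euclidean norm.
   Context: $P_X=\bm X(\bm X^T\bm X)^{-1}\bm X^T$; $\bm D(\bm\tau)=\oplus_{j=1}^r\tau_j\bm I_{q_j}$; $S(\bm\tau)=\bm Z^T(\bm I-P_X)\bm Z+\bm D(\bm\tau)$. *)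

theory Defs
  imports "HOL-Analysis.Analysis"
begin

text \<open>Matrices are HOL-Analysis matrices: an n x p matrix is of type real^'p^'n.
  The q columns of Z are partitioned into r blocks by a map blk :: 'q \<Rightarrow> 'r;
  block j consists of the columns k with blk k = j (so q_j = card of that set).\<close>

definition proj_mat :: "real^'p^'n \<Rightarrow> real^'n^'n" where
  "proj_mat X = X ** matrix_inv (transpose X ** X) ** transpose X"

definition blockdiag :: "('q \<Rightarrow> 'r) \<Rightarrow> real^'r \<Rightarrow> real^'q^'q" where
  "blockdiag blk \<tau> = (\<chi> i j. if i = j then \<tau> $ (blk i) else 0)"

definition S_mat :: "real^'p^'n \<Rightarrow> real^'q^'n \<Rightarrow> ('q \<Rightarrow> 'r) \<Rightarrow> real^'r \<Rightarrow> real^'q^'q" where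
  "S_mat X Z blk \<tau> = transpose Z ** (mat 1 - proj_mat X) ** Z + blockdiag blk \<tau>"

end

theory Submission imports Defs begin

lemma base_bound:
  fixes B :: "real^'q^'n"
  shows "\<exists>C\<ge>0. \<forall>y. (\<forall>z. B *v z = 0 \<and> (\<forall>k. z$k \<noteq> 0 \<longrightarrow> y$k \<noteq> 0) \<longrightarrow> z = 0)
            \<longrightarrow> norm y \<le> C * norm (B *v y)"
proof -
  define V where "V S = {y::real^'q. \<forall>k. k \<notin> S \<longrightarrow> y$k = 0}" for S
  have sub: "subspace (V S)" for S
    unfolding subspace_def V_def by auto
  have ex: "\<exists>c\<ge>0. (\<forall>z\<in>V S. B *v z = 0 \<longrightarrow> z = 0) \<longrightarrow> (\<forall>y\<in>V S. norm y \<le> c * norm (B *v y))" for S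
  proof (cases "\<forall>z\<in>V S. B *v z = 0 \<longrightarrow> z = 0")
    case True
    have "bounded_linear ((*v) B)" by (simp add: matrix_vector_mul_bounded_linear)
    then obtain e where e: "e > 0" "\<forall>x\<in>V S. norm (B *v x) \<ge> e * norm x"
      using injective_imp_isometric[OF closed_subspace[OF sub] sub, of "(*v) B"] True by blast
    have "\<forall>y\<in>V S. norm y \<le> (1/e) * norm (B *v y)"
    proof
      fix y assume "y \<in> V S"
      with e have "e * norm y \<le> norm (B *v y)" by blast
      then show "norm y \<le> (1/e) * norm (B *v y)" using e(1) by (simp add: field_simps)
    qed
    then show ?thesis using e(1) by (intro exI[of _ "1/e"]) auto
  next
    case False then show ?thesis by auto
  qed
  then obtain cf where cf: "\<And>S. cf S \<ge> 0 \<and> ((\<forall>z\<in>V S. B *v z = 0 \<longrightarrow> z = 0) \<longrightarrow> (\<forall>y\<in>V S. norm y \<le> cf S * norm (B *v y)))"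
    by metis
  define C where "C = (\<Sum>S\<in>UNIV. cf S)"
  have C0: "C \<ge> 0" unfolding C_def using cf by (simp add: sum_nonneg)
  have le: "cf S \<le> C" for S
    unfolding C_def by (rule member_le_sum) (use cf in auto)
  show ?thesis
  proof (intro exI[of _ C] conjI allI impI C0)
    fix y :: "real^'q"
    assume h: "\<forall>z. B *v z = 0 \<and> (\<forall>k. z$k \<noteq> 0 \<longrightarrow> y$k \<noteq> 0) \<longrightarrow> z = 0"
    let ?S = "{k. y$k \<noteq> 0}"
    have g: "\<forall>z\<in>V ?S. B *v z = 0 \<longrightarrow> z = 0"
      using h unfolding V_def by auto
    have yV: "y \<in> V ?S" unfolding V_def by auto
    have "norm y \<le> cf ?S * norm (B *v y)" using cf[of ?S] g yV by blast
    also have "\<dots> \<le> C * norm (B *v y)" by (rule mult_right_mono[OF le]) simp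
    finally show "norm y \<le> C * norm (B *v y)" .
  qed
qed

definition nocf :: "real^'q^'n \<Rightarrow> real^'q \<Rightarrow> bool" where
  "nocf B x \<longleftrightarrow> (\<forall>z. B *v z = 0 \<and> (\<forall>k. z$k \<noteq> 0 \<longrightarrow> z$k * x$k > 0) \<longrightarrow> z = 0)"

lemma sign_trans: "(a::real) * b > 0 \<Longrightarrow> b * c > 0 \<Longrightarrow> a * c > 0"
  by (auto simp: zero_less_mult_iff)

lemma step:
  fixes B :: "real^'q^'n"
  assumes nx: "nocf B x" and z: "z \<noteq> 0" "B *v z = 0" "\<forall>k. z$k \<noteq> 0 \<longrightarrow> x$k \<noteq> 0"
  shows "\<exists>s>0. nocf B (x + s *\<^sub>R z) \<and> card {k. (x + s *\<^sub>R z)$k \<noteq> 0} < card {k. x$k \<noteq> 0}"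
proof -
  define Kp where "Kp = {k. x$k * z$k < 0}"
  have "\<not> (\<forall>k. z$k \<noteq> 0 \<longrightarrow> z$k * x$k > 0)"
    using nx z unfolding nocf_def by blast
  then obtain k1 where k1: "z$k1 \<noteq> 0" "z$k1 * x$k1 \<le> 0" by auto
  have "x$k1 \<noteq> 0" using z(3) k1 by auto
  with k1 have "x$k1 * z$k1 < 0" by (simp add: mult.commute less_le)
  then have Kne: "Kp \<noteq> {}" unfolding Kp_def by auto
  have Kfin: "finite Kp" by simp
  define s where "s = Min ((\<lambda>k. - x$k / z$k) ` Kp)"
  have pos: "- x$k / z$k > 0" if "k \<in> Kp" for k
  proof -
    from that have "x$k * z$k < 0" unfolding Kp_def by auto
    then show ?thesis by (auto simp: zero_less_divide_iff mult_less_0_iff divide_neg_pos divide_pos_neg)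
  qed
  have s0: "s > 0" unfolding s_def using Kne Kfin pos by (subst Min_gr_iff) auto
  have sle: "s \<le> - x$k / z$k" if "k \<in> Kp" for k
    unfolding s_def using that Kfin by (intro Min_le) auto
  have "s \<in> (\<lambda>k. - x$k / z$k) ` Kp" unfolding s_def by (rule Min_in) (use Kne in auto)
  then obtain k0 where k0: "k0 \<in> Kp" "s = - x$k0 / z$k0" by blast
  define y where "y = x + s *\<^sub>R z"
  have yc: "y$k = x$k + s * z$k" for k unfolding y_def by simp
  have c1: "y$k * x$k > 0" if "y$k \<noteq> 0" for k
  proof (cases "x$k = 0")
    case True
    then have "z$k = 0" using z(3) by auto
    then show ?thesis using that True yc by simp
  next
    case xk: False
    have eq: "y$k * x$k = x$k * x$k + s * (x$k * z$k)" by (simp add: yc algebra_simps)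
    show ?thesis
    proof (cases "x$k * z$k \<ge> 0")
      case True
      have "x$k * x$k > 0" using xk by (metis not_real_square_gt_zero)
      moreover have "s * (x$k * z$k) \<ge> 0" using s0 True by simp
      ultimately show ?thesis using eq by linarith
    next
      case False
      then have kK: "k \<in> Kp" unfolding Kp_def by auto
      have zk: "z$k \<noteq> 0" using False by auto
      have "s * (x$k * z$k) \<ge> (- x$k / z$k) * (x$k * z$k)"
        using sle[OF kK] False by (intro mult_right_mono_neg) auto
      also have "(- x$k / z$k) * (x$k * z$k) = - (x$k * x$k)" using zk by (simp add: field_simps)
      finally have "y$k * x$k \<ge> 0" using eq by linarith
      moreover have "y$k * x$k \<noteq> 0" using that xk by simp
      ultimately show ?thesis by linarith
    qed
  qed
  have zk0: "z$k0 \<noteq> 0" using k0(1) unfolding Kp_def by auto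
  have y0: "y$k0 = 0" using k0(2) zk0 yc[of k0] by (simp add: field_simps)
  have xk0: "x$k0 \<noteq> 0" using k0(1) unfolding Kp_def by auto
  have sub: "{k. y$k \<noteq> 0} \<subset> {k. x$k \<noteq> 0}"
  proof
    show "{k. y$k \<noteq> 0} \<subseteq> {k. x$k \<noteq> 0}" using c1 by fastforce
    show "{k. y$k \<noteq> 0} \<noteq> {k. x$k \<noteq> 0}" using y0 xk0 by blast
  qed
  have card: "card {k. y$k \<noteq> 0} < card {k. x$k \<noteq> 0}"
    by (rule psubset_card_mono[OF _ sub]) simp
  have ny: "nocf B y"
    unfolding nocf_def
  proof (intro allI impI)
    fix w assume w: "B *v w = 0 \<and> (\<forall>k. w$k \<noteq> 0 \<longrightarrow> w$k * y$k > 0)"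
    have "\<forall>k. w$k \<noteq> 0 \<longrightarrow> w$k * x$k > 0"
    proof (intro allI impI)
      fix k assume "w$k \<noteq> 0"
      then have a: "w$k * y$k > 0" using w by auto
      then have "y$k \<noteq> 0" by auto
      then have "y$k * x$k > 0" by (rule c1)
      with a show "w$k * x$k > 0" by (rule sign_trans)
    qed
    then show "w = 0" using nx w unfolding nocf_def by blast
  qed
  show ?thesis using s0 ny card unfolding y_def by blast
qed

lemma comb: "(s::real) + t \<noteq> 0 \<Longrightarrow> x = t / (s + t) * (x + s * z) + s / (s + t) * (x + t * - z)"
proof -
  assume st: "s + t \<noteq> 0"
  have "t / (s + t) * (x + s * z) + s / (s + t) * (x + t * - z) = (t * (x + s * z) + s * (x + t * - z)) / (s + t)"
    by (simp add: add_divide_distrib)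
  also have "t * (x + s * z) + s * (x + t * - z) = (s + t) * x" by (simp add: algebra_simps)
  also have "(s + t) * x / (s + t) = x" using st by simp
  finally show ?thesis by simp
qed

lemma nocf_bound:
  fixes B :: "real^'q^'n"
  obtains C where "C \<ge> 0" "\<And>x. nocf B x \<Longrightarrow> norm x \<le> C * norm (B *v x)"
proof -
  obtain C where C0: "C \<ge> 0" and C: "\<And>y. (\<forall>z. B *v z = 0 \<and> (\<forall>k. z$k \<noteq> 0 \<longrightarrow> y$k \<noteq> 0) \<longrightarrow> z = 0)
            \<Longrightarrow> norm y \<le> C * norm (B *v y)"
    using base_bound[of B] by blast
  have main: "\<forall>x. card {k. x$k \<noteq> 0} = n \<longrightarrow> nocf B x \<longrightarrow> norm x \<le> C * norm (B *v x)" for n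
  proof (induction n rule: less_induct)
    case (less n)
    show ?case
    proof (intro allI impI)
      fix x assume cx: "card {k. x$k \<noteq> 0} = n" and nx: "nocf B x"
      show "norm x \<le> C * norm (B *v x)"
      proof (cases "\<forall>z. B *v z = 0 \<and> (\<forall>k. z$k \<noteq> 0 \<longrightarrow> x$k \<noteq> 0) \<longrightarrow> z = 0")
        case True then show ?thesis by (rule C)
      next
        case False
        then obtain z where z: "z \<noteq> 0" "B *v z = 0" "\<forall>k. z$k \<noteq> 0 \<longrightarrow> x$k \<noteq> 0" by blast
        obtain s where s: "s > 0" "nocf B (x + s *\<^sub>R z)" "card {k. (x + s *\<^sub>R z)$k \<noteq> 0} < n"
          using step[OF nx z] cx by blast
        have z': "- z \<noteq> 0" "B *v (- z) = 0" "\<forall>k. (- z)$k \<noteq> 0 \<longrightarrow> x$k \<noteq> 0"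
          using z matrix_vector_mult_scaleR[of B "-1" z] by auto
        obtain t where t: "t > 0" "nocf B (x + t *\<^sub>R (- z))" "card {k. (x + t *\<^sub>R (- z))$k \<noteq> 0} < n"
          using step[OF nx z'] cx by blast
        define y1 where "y1 = x + s *\<^sub>R z"
        define y2 where "y2 = x + t *\<^sub>R (- z)"
        have B1: "B *v y1 = B *v x" unfolding y1_def using z(2) by (simp add: algebra_simps)
        have B2: "B *v y2 = B *v x" unfolding y2_def using z(2) by (simp add: algebra_simps)
        have n1: "norm y1 \<le> C * norm (B *v x)" using less.IH[OF s(3)] s(2) B1 unfolding y1_def by metis
        have n2: "norm y2 \<le> C * norm (B *v x)" using less.IH[OF t(3)] t(2) B2 unfolding y2_def by metis
        have xe: "x = (t / (s + t)) *\<^sub>R y1 + (s / (s + t)) *\<^sub>R y2"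
        proof -
          have st: "s + t \<noteq> 0" using s(1) t(1) by simp
          show ?thesis unfolding vec_eq_iff y1_def y2_def
          proof
            fix i
            show "x$i = ((t / (s + t)) *\<^sub>R (x + s *\<^sub>R z) + (s / (s + t)) *\<^sub>R (x + t *\<^sub>R - z))$i"
              using comb[OF st, of "x$i" "z$i"] by simp
          qed
        qed
        have "norm x \<le> norm ((t / (s + t)) *\<^sub>R y1) + norm ((s / (s + t)) *\<^sub>R y2)"
          by (subst xe) (rule norm_triangle_ineq)
        also have "\<dots> = (t / (s + t)) * norm y1 + (s / (s + t)) * norm y2"
          using s(1) t(1) by simp
        also have "\<dots> \<le> (t / (s + t)) * (C * norm (B *v x)) + (s / (s + t)) * (C * norm (B *v x))"
          using s(1) t(1) n1 n2 by (intro add_mono mult_left_mono) auto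
        also have "\<dots> = C * norm (B *v x)"
        proof -
          have "t/(s+t) + s/(s+t) = 1" using s(1) t(1) by (simp add: add_divide_distrib[symmetric] add.commute)
          then show ?thesis by (metis distrib_right mult_1)
        qed
        finally show ?thesis .
      qed
    qed
  qed
  show ?thesis using that C0 main by blast
qed

declare transpose_matrix_vector[simp del]

lemma inner_mv_transpose:
  fixes A :: "real^'m^'n"
  shows "inner (A *v a) b = inner a (transpose A *v b)"
  by (metis dot_lmul_matrix inner_commute transpose_matrix_vector)

lemma inv_props:
  fixes A :: "real^'n^'n"
  assumes "invertible A"
  shows "A ** matrix_inv A = mat 1 \<and> matrix_inv A ** A = mat 1"
  using assms unfolding matrix_inv_def invertible_def by (rule someI_ex)

lemma invertible_ker:
  fixes A :: "real^'n^'n"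
  assumes "\<And>x. A *v x = 0 \<Longrightarrow> x = 0"
  shows "invertible A"
  using assms by (simp add: invertible_left_inverse matrix_left_invertible_ker)

lemma proj_facts:
  fixes X :: "real^'p^'n"
  assumes "rank X = CARD('p)"
  shows "(mat 1 - proj_mat X) *v ((mat 1 - proj_mat X) *v a) = (mat 1 - proj_mat X) *v a"
    and "inner ((mat 1 - proj_mat X) *v a) b = inner a ((mat 1 - proj_mat X) *v b)"
proof -
  define A where "A = transpose X ** X"
  define G where "G = matrix_inv A"
  have injX: "inj ((*v) X)" using assms full_rank_injective by blast
  have invA: "invertible A"
  proof (rule invertible_ker)
    fix x assume "A *v x = 0"
    then have "inner x (transpose X *v (X *v x)) = 0" unfolding A_def by (simp add: matrix_vector_mul_assoc)
    then have "inner (X *v x) (X *v x) = 0" by (simp add: inner_mv_transpose)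
    then have "X *v x = X *v 0" by simp
    then show "x = 0" using injX by (meson injD)
  qed
  have GA: "G ** A = mat 1" and AG: "A ** G = mat 1" using inv_props[OF invA] unfolding G_def by auto
  have tA: "transpose A = A" unfolding A_def by (simp add: matrix_transpose_mul)
  have "transpose G ** A = transpose (A ** G)" by (simp add: matrix_transpose_mul tA)
  then have tGA: "transpose G ** A = mat 1" using AG by simp
  have "transpose G = transpose G ** (A ** G)" using AG by simp
  also have "\<dots> = (transpose G ** A) ** G" by (simp add: matrix_mul_assoc)
  also have "\<dots> = G" using tGA by simp
  finally have tG: "transpose G = G" .
  have Pv: "proj_mat X *v a = X *v (G *v (transpose X *v a))" for a
    unfolding proj_mat_def G_def A_def by (simp add: matrix_vector_mul_assoc matrix_mul_assoc)
  have GAv: "G *v (transpose X *v (X *v y)) = y" for y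
    using GA unfolding A_def by (simp add: matrix_vector_mul_assoc)
  have PP: "proj_mat X *v (proj_mat X *v a) = proj_mat X *v a" for a
    by (simp add: Pv GAv)
  have Gs: "inner (G *v u) v = inner u (G *v v)" for u v
    using inner_mv_transpose[of G u v] tG by simp
  have Ps: "inner (proj_mat X *v a) b = inner a (proj_mat X *v b)" for a b
  proof -
    have "inner (proj_mat X *v a) b = inner (G *v (transpose X *v a)) (transpose X *v b)"
      by (simp add: Pv inner_mv_transpose)
    also have "\<dots> = inner (transpose X *v a) (G *v (transpose X *v b))" by (rule Gs)
    also have "\<dots> = inner a (X *v (G *v (transpose X *v b)))"
      using inner_mv_transpose[of "transpose X" a] by simp
    finally show ?thesis by (simp add: Pv)
  qed
  have Mv: "(mat 1 - proj_mat X) *v a = a - proj_mat X *v a" for a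
    by (simp add: matrix_vector_mult_diff_rdistrib)
  show "(mat 1 - proj_mat X) *v ((mat 1 - proj_mat X) *v a) = (mat 1 - proj_mat X) *v a"
    by (simp add: Mv PP matrix_vector_right_distrib matrix_vector_mult_diff_distrib)
  show "inner ((mat 1 - proj_mat X) *v a) b = inner a ((mat 1 - proj_mat X) *v b)"
    by (simp add: Mv Ps inner_diff_left inner_diff_right)
qed

theorem lemma2:
  fixes X :: "real^'p^'n" and Z :: "real^'q^'n" and blk :: "'q \<Rightarrow> 'r::finite"
  assumes "rank X = CARD('p)"
  shows "\<exists>\<phi>::real. \<forall>\<tau>::real^'r. \<forall>l::real^'n.
           (\<forall>j. \<tau> $ j > 0) \<longrightarrow>
           norm (matrix_inv (S_mat X Z blk \<tau>) *v (transpose Z *v ((mat 1 - proj_mat X) *v l)))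
             \<le> \<phi> * (\<Sum>i\<in>UNIV. \<bar>l $ i\<bar>)"
proof -
  define M where "M = mat 1 - proj_mat X"
  define B where "B = M ** Z"
  have MM: "M *v (M *v a) = M *v a" for a unfolding M_def by (rule proj_facts(1)[OF assms])
  have Ms: "inner (M *v a) b = inner a (M *v b)" for a b unfolding M_def by (rule proj_facts(2)[OF assms])
  have Bv: "B *v y = M *v (Z *v y)" for y unfolding B_def by (simp add: matrix_vector_mul_assoc)
  obtain C where C0: "C \<ge> 0" and C: "\<And>x. nocf B x \<Longrightarrow> norm x \<le> C * norm (B *v x)"
    using nocf_bound[of B] by blast
  show ?thesis
  proof (intro exI[of _ C] allI impI)
    fix \<tau> :: "real^'r" and l :: "real^'n"
    assume tp: "\<forall>j. \<tau> $ j > 0"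
    define d where "d k = \<tau> $ blk k" for k
    have dp: "d k > 0" for k unfolding d_def using tp by auto
    define Sm where "Sm = S_mat X Z blk \<tau>"
    have Dv: "blockdiag blk \<tau> *v y = (\<chi> k. d k * y$k)" for y
    proof -
      have "(\<Sum>j\<in>UNIV. (if i = j then c else 0) * y $ j) = c * y$i" for i and c :: real
      proof -
        have "(\<Sum>j\<in>UNIV. (if i = j then c else 0) * y $ j) = (\<Sum>j\<in>UNIV. if i = j then c * y$j else 0)"
          by (rule sum.cong) auto
        also have "\<dots> = c * y$i" by simp
        finally show ?thesis .
      qed
      then show ?thesis unfolding blockdiag_def d_def by (simp add: matrix_vector_mult_def vec_eq_iff)
    qed
    have Sv: "Sm *v y = transpose Z *v (M *v (Z *v y)) + (\<chi> k. d k * y$k)" for y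
      unfolding Sm_def S_mat_def M_def
      by (simp add: matrix_vector_mult_add_rdistrib matrix_vector_mul_assoc matrix_mul_assoc Dv)
    have ZM: "inner w (transpose Z *v (M *v u)) = inner (B *v w) (M *v u)" for w u
    proof -
      have "inner w (transpose Z *v (M *v u)) = inner (Z *v w) (M *v u)"
        by (simp add: inner_mv_transpose)
      also have "\<dots> = inner (Z *v w) (M *v (M *v u))" by (simp add: MM)
      also have "\<dots> = inner (M *v (Z *v w)) (M *v u)" by (simp add: Ms)
      finally show ?thesis by (simp add: Bv)
    qed
    have quad: "inner w (Sm *v y) = inner (B *v w) (B *v y) + (\<Sum>k\<in>UNIV. w$k * (d k * y$k))" for w y
    proof -
      have "inner w (\<chi> k. d k * y$k) = (\<Sum>k\<in>UNIV. w$k * (d k * y$k))" by (simp add: inner_vec_def)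
      then show ?thesis by (simp add: Sv inner_add_right ZM Bv)
    qed
    have invS: "invertible Sm"
    proof (rule invertible_ker)
      fix y assume "Sm *v y = 0"
      then have "inner y (Sm *v y) = 0" by simp
      then have e: "inner (B *v y) (B *v y) + (\<Sum>k\<in>UNIV. y$k * (d k * y$k)) = 0" by (simp add: quad)
      have nn: "\<forall>k\<in>UNIV. y$k * (d k * y$k) \<ge> 0"
      proof
        fix k
        have "0 \<le> d k * (y$k * y$k)" using dp[of k] by simp
        then show "y$k * (d k * y$k) \<ge> 0" by (metis mult.left_commute)
      qed
      have s1: "inner (B *v y) (B *v y) \<ge> 0" by (rule inner_ge_zero)
      have s2: "(\<Sum>k\<in>UNIV. y$k * (d k * y$k)) \<ge> 0" by (rule sum_nonneg) (use nn in blast)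
      have "(\<Sum>k\<in>UNIV. y$k * (d k * y$k)) = 0" using e s1 s2 by linarith
      then have z: "\<forall>k\<in>UNIV. y$k * (d k * y$k) = 0"
        using sum_nonneg_eq_0_iff[of UNIV "\<lambda>k. y$k * (d k * y$k)"] nn by simp
      show "y = 0" unfolding vec_eq_iff
      proof
        fix k
        have "y$k * (d k * y$k) = 0" using z by blast
        then show "y$k = 0$k" using dp[of k] by simp
      qed
    qed
    have SS: "Sm ** matrix_inv Sm = mat 1" using inv_props[OF invS] by simp
    define v where "v = M *v l"
    define x where "x = matrix_inv Sm *v (transpose Z *v v)"
    have Sx: "Sm *v x = transpose Z *v v" unfolding x_def
      by (subst matrix_vector_mul_assoc) (simp add: SS)
    have key: "inner (B *v w) (B *v x) + (\<Sum>k\<in>UNIV. w$k * (d k * x$k)) = inner (B *v w) v" for w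
    proof -
      have "inner w (Sm *v x) = inner (B *v w) (M *v l)" using Sx ZM unfolding v_def by simp
      then show ?thesis by (simp add: quad v_def)
    qed
    have nn: "(\<Sum>k\<in>UNIV. x$k * (d k * x$k)) \<ge> 0"
    proof (rule sum_nonneg)
      fix k
      have "0 \<le> d k * (x$k * x$k)" using dp[of k] by simp
      then show "x$k * (d k * x$k) \<ge> 0" by (metis mult.left_commute)
    qed
    have "norm (B *v x) ^ 2 \<le> inner (B *v x) v"
      using key[of x] nn by (simp add: power2_norm_eq_inner)
    also have "\<dots> \<le> norm (B *v x) * norm v" by (rule norm_cauchy_schwarz)
    finally have "norm (B *v x) * norm (B *v x) \<le> norm (B *v x) * norm v" by (simp add: power2_eq_square)
    then have Bx: "norm (B *v x) \<le> norm v"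
    proof (cases "norm (B *v x) = 0")
      case False then show ?thesis using \<open>norm (B *v x) * norm (B *v x) \<le> norm (B *v x) * norm v\<close>
        by (simp add: mult_le_cancel_left)
    qed simp
    have "norm v ^ 2 = inner (M *v l) (M *v l)" unfolding v_def by (simp add: power2_norm_eq_inner)
    also have "\<dots> = inner l v" unfolding v_def by (simp add: Ms MM)
    also have "\<dots> \<le> norm l * norm v" by (rule norm_cauchy_schwarz)
    finally have "norm v * norm v \<le> norm l * norm v" by (simp add: power2_eq_square)
    then have vl: "norm v \<le> norm l"
    proof (cases "norm v = 0")
      case False then show ?thesis using \<open>norm v * norm v \<le> norm l * norm v\<close>
        by (simp add: mult_le_cancel_right)
    qed simp
    have ncf: "nocf B x"
      unfolding nocf_def
    proof (intro allI impI)
      fix z assume z: "B *v z = 0 \<and> (\<forall>k. z$k \<noteq> 0 \<longrightarrow> z$k * x$k > 0)"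
      have s0: "(\<Sum>k\<in>UNIV. z$k * (d k * x$k)) = 0" using key[of z] z by simp
      have nn: "\<forall>k\<in>UNIV. z$k * (d k * x$k) \<ge> 0"
      proof
        fix k
        have e: "z$k * (d k * x$k) = d k * (z$k * x$k)" by (simp add: algebra_simps)
        show "z$k * (d k * x$k) \<ge> 0"
        proof (cases "z$k = 0")
          case False
          then have "z$k * x$k > 0" using z by blast
          then have "0 \<le> d k * (z$k * x$k)" using dp[of k] by simp
          then show ?thesis using e by linarith
        qed simp
      qed
      have "\<forall>k\<in>UNIV. z$k * (d k * x$k) = 0"
        using sum_nonneg_eq_0_iff[of UNIV "\<lambda>k. z$k * (d k * x$k)"] nn s0 by simp
      then show "z = 0" unfolding vec_eq_iff
      proof (intro allI)
        fix k assume h: "\<forall>k\<in>UNIV. z$k * (d k * x$k) = 0"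
        show "z$k = 0$k"
        proof (rule ccontr)
          assume "z$k \<noteq> 0$k"
          then have "z$k * x$k > 0" using z by simp
          then have "d k * (z$k * x$k) > 0" using dp[of k] by simp
          moreover have "z$k * (d k * x$k) = d k * (z$k * x$k)" by (simp add: algebra_simps)
          moreover have "z$k * (d k * x$k) = 0" using h by blast
          ultimately show False by linarith
        qed
      qed
    qed
    have "norm x \<le> C * norm (B *v x)" by (rule C[OF ncf])
    also have "\<dots> \<le> C * norm l" using C0 Bx vl by (intro mult_left_mono) auto
    also have "\<dots> \<le> C * (\<Sum>i\<in>UNIV. \<bar>l $ i\<bar>)" using C0 norm_le_l1_cart by (intro mult_left_mono) auto
    finally show "norm (matrix_inv (S_mat X Z blk \<tau>) *v (transpose Z *v ((mat 1 - proj_mat X) *v l)))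
             \<le> C * (\<Sum>i\<in>UNIV. \<bar>l $ i\<bar>)"
      unfolding x_def v_def Sm_def M_def .
  qed
qed

end
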